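(* Let $F\in C^3(\mathbb{R}^n\setminus\{0\})$ be a strongly convex norm on $\mathbb{R}^n$, and let $u$ be a $C^2$ function on an open set $U\subset\mathbb{R}^n$. With the summation convention, $F=F(\nabla u)$, $F_i=F_{\xi_i}(\nabla u)$, $a_{ij}=\frac{\partial^2}{\partial\xi_i\partial\xi_j}(\tfrac12F^2)(\nabla u)=F_iF_j+FF_{\xi_i\xi_j}(\nabla u)$, and $u_{ij}=\partial^2u/\partial x_i\partial x_j$, at every point where $\nabla u\neq0$ one has $$a_{ij}a_{kl}u_{ik}u_{jl}\ge a_{ij}F_kF_lu_{ik}u_{jl}.$$
   Context: A norm on $\mathbb{R}^n$ is a convex, even, positively $1$-homogeneous function $F:\mathbb{R}^n\to[0,\infty)$, $C^1$ away from $0$, positive away from $0$. It is strongly convex if $\mathrm{Hess}(F^2)$ is positive definite on $\mathbb{R}^n\setminus\{0\}$. *)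

theory Defs
  imports "HOL-Analysis.Analysis"
begin

definition partial :: "'n::finite \<Rightarrow> (real^'n \<Rightarrow> real) \<Rightarrow> real^'n \<Rightarrow> real" where
  "partial i f x = frechet_derivative f (at x) (axis i 1)"

definition grad :: "(real^'n::finite \<Rightarrow> real) \<Rightarrow> real^'n \<Rightarrow> real^'n" where
  "grad f x = (\<chi> i. partial i f x)"

definition hess :: "(real^'n::finite \<Rightarrow> real) \<Rightarrow> real^'n \<Rightarrow> 'n \<Rightarrow> 'n \<Rightarrow> real" where
  "hess f x i j = partial j (partial i f) x"

fun Ck_on :: "nat \<Rightarrow> (real^'n::finite) set \<Rightarrow> (real^'n \<Rightarrow> real) \<Rightarrow> bool" where
  "Ck_on 0 S f = continuous_on S f"
| "Ck_on (Suc k) S f = ((\<forall>x\<in>S. f differentiable (at x)) \<and> (\<forall>i. Ck_on k S (partial i f)))"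

definition is_norm_fn :: "(real^'n::finite \<Rightarrow> real) \<Rightarrow> bool" where
  "is_norm_fn F \<longleftrightarrow>
     convex_on UNIV F \<and>
     (\<forall>x. F (- x) = F x) \<and>
     (\<forall>t x. t > 0 \<longrightarrow> F (t *\<^sub>R x) = t * F x) \<and>
     (\<forall>x. F x \<ge> 0) \<and>
     (\<forall>x. x \<noteq> 0 \<longrightarrow> F x > 0) \<and>
     Ck_on 1 (UNIV - {0}) F"

definition strongly_convex_norm :: "(real^'n::finite \<Rightarrow> real) \<Rightarrow> bool" where
  "strongly_convex_norm F \<longleftrightarrow> is_norm_fn F \<and>
     (\<forall>\<xi>. \<xi> \<noteq> 0 \<longrightarrow> (\<forall>v. v \<noteq> 0 \<longrightarrow>
        (\<Sum>i\<in>UNIV. \<Sum>j\<in>UNIV. hess (\<lambda>y. (F y)^2) \<xi> i j * v$i * v$j) > 0))"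

end

theory Submission
  imports Defs
begin


definition Q :: "('n::finite \<Rightarrow> 'n \<Rightarrow> real) \<Rightarrow> ('n \<Rightarrow> real) \<Rightarrow> real" where
  "Q H v = (\<Sum>i\<in>UNIV. \<Sum>j\<in>UNIV. H i j * v i * v j)"

lemma Q_add_scaled:
  "Q H (\<lambda>i. v i + t * x i) = Q H v + t * (\<Sum>i\<in>UNIV. \<Sum>j\<in>UNIV. H i j * v i * x j)
     + t * (\<Sum>i\<in>UNIV. \<Sum>j\<in>UNIV. H i j * x i * v j) + t^2 * Q H x"
  unfolding Q_def
  by (simp add: algebra_simps sum.distrib sum_distrib_left power2_eq_square)

lemma dl_a: "(x::real) * (if P then 1 else 0) = (if P then x else 0)" by simp
lemma dl_b: "(if P then (1::real) else 0) * x = (if P then x else 0)" by simp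
lemma dl_c: "(\<Sum>b\<in>A. if P then (g b::real) else 0) = (if P then \<Sum>b\<in>A. g b else 0)" by simp

lemma sum_delta2: "(\<Sum>a\<in>UNIV. \<Sum>b\<in>UNIV. (H::'n::finite\<Rightarrow>'n\<Rightarrow>real) a b * (if a = i then 1 else 0) * (if b = j then 1 else 0)) = H i j"
  by (simp only: dl_a dl_b) (simp add: sum.delta sum.delta')
lemma sum_delta_l: "(\<Sum>a\<in>UNIV. \<Sum>b\<in>UNIV. (H::'n::finite\<Rightarrow>'n\<Rightarrow>real) a b * (if a = i then 1 else 0) * v b) = (\<Sum>b\<in>UNIV. H i b * v b)"
  by (simp only: dl_a dl_b if_distrib[of "\<lambda>x. x * v _"] mult_zero_left dl_c) (simp add: sum.delta sum.delta')
lemma sum_delta_r: "(\<Sum>a\<in>UNIV. \<Sum>b\<in>UNIV. (H::'n::finite\<Rightarrow>'n\<Rightarrow>real) a b * v a * (if b = j then 1 else 0)) = (\<Sum>a\<in>UNIV. H a j * v a)"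
  by (simp only: dl_a dl_b) (simp add: sum.delta sum.delta')

lemma Q_delta: "Q H (\<lambda>k. if k = j then 1 else 0) = H j j"
  unfolding Q_def by (rule sum_delta2)

lemma psd_diag_zero:
  assumes sym: "\<forall>i j. H i j = H j i" and psd: "\<forall>v. Q H v \<ge> 0" and hii: "H i i = 0"
  shows "H i j = 0"
proof (rule ccontr)
  assume ne: "H i j \<noteq> 0"
  define t where "t = - (H j j + 1) / (2 * H i j)"
  have "Q H (\<lambda>k. (if k = j then 1 else 0) + t * (if k = i then 1 else 0)) = H j j + t * H j i + t * H i j + t^2 * H i i"
    by (simp only: Q_add_scaled Q_delta sum_delta2)
  also have "\<dots> = H j j + 2 * t * H i j" using sym hii by simp
  also have "\<dots> = -1" using ne unfolding t_def by (simp add: field_simps)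
  finally show False using psd by (metis neg_0_le_iff_le not_one_le_zero)
qed

lemma Q_rank1_sub:
  "Q (\<lambda>i j. H i j - w i * w j * c) v = Q H v - (\<Sum>i\<in>UNIV. w i * v i)^2 * c"
  unfolding Q_def power2_eq_square
  by (simp add: algebra_simps sum_subtractf sum_distrib_left sum_distrib_right)

lemma psd_decomp:
  fixes H :: "'n::finite \<Rightarrow> 'n \<Rightarrow> real"
  assumes "\<forall>i j. H i j = H j i" "\<forall>v. Q H v \<ge> 0"
  shows "\<exists>ws. \<forall>i j. H i j = (\<Sum>w\<leftarrow>ws. w i * w j)"
  using assms
proof (induction "card {i. H i i \<noteq> 0}" arbitrary: H rule: less_induct)
  case less
  show ?case
  proof (cases "\<exists>r. H r r \<noteq> 0")
    case False
    then have "\<forall>i j. H i j = 0" using psd_diag_zero less.prems by blast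
    then show ?thesis by (intro exI[of _ "[]"]) simp
  next
    case True
    then obtain r where r0: "H r r \<noteq> 0" by blast
    have "H r r \<ge> 0" using less.prems(2) Q_delta by metis
    with r0 have rp: "H r r > 0" by simp
    define H' where "H' i j = H i j - H r i * H r j * (1 / H r r)" for i j
    have sym': "\<forall>i j. H' i j = H' j i" using less.prems(1) unfolding H'_def by (simp add: mult.commute)
    have psd': "Q H' v \<ge> 0" for v
    proof -
      define L where "L = (\<Sum>i\<in>UNIV. H r i * v i)"
      define s where "s = L / H r r"
      have e1: "(\<Sum>a\<in>UNIV. H a r * v a) = L" unfolding L_def using less.prems(1) by metis
      have "Q H (\<lambda>k. v k + (-s) * (if k = r then 1 else 0)) = Q H v + (-s) * L + (-s) * L + s^2 * H r r"
        by (simp only: Q_add_scaled Q_delta sum_delta_r sum_delta_l e1 L_def) simp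
      also have "\<dots> = Q H v - L^2 * (1 / H r r)" using rp unfolding s_def
        by (simp add: field_simps power2_eq_square)
      also have "\<dots> = Q H' v" unfolding H'_def Q_rank1_sub L_def by simp
      finally show ?thesis using less.prems(2) by metis
    qed
    have sub: "{i. H' i i \<noteq> 0} \<subset> {i. H i i \<noteq> 0}"
    proof -
      have "H' i i = 0" if "H i i = 0" for i
        using psd_diag_zero[OF less.prems that, of r] psd_diag_zero[OF less.prems that, of i]
          less.prems(1) that unfolding H'_def by simp
      moreover have "H' r r = 0" using rp unfolding H'_def by (simp add: field_simps)
      ultimately show ?thesis using r0 by blast
    qed
    then have "card {i. H' i i \<noteq> 0} < card {i. H i i \<noteq> 0}" by (simp add: psubset_card_mono)
    from less.hyps[OF this sym'] psd' obtain ws where ws: "\<forall>i j. H' i j = (\<Sum>w\<leftarrow>ws. w i * w j)" by blast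
    define w0 where "w0 i = H r i / sqrt (H r r)" for i
    have "H i j = (\<Sum>w\<leftarrow>w0 # ws. w i * w j)" for i j
    proof -
      have "w0 i * w0 j = H r i * H r j * (1 / H r r)" unfolding w0_def using rp
        by (simp add: field_simps)
      then show ?thesis using ws[rule_format, of i j] unfolding H'_def by simp
    qed
    then show ?thesis by blast
  qed
qed




lemma Q_rank1_add:
  "Q (\<lambda>i j. w i * w j + c * H i j) v = (\<Sum>i\<in>UNIV. w i * v i)^2 + c * Q H v"
  unfolding Q_def power2_eq_square
  by (simp add: algebra_simps sum.distrib sum_distrib_left sum_distrib_right)

definition T4 :: "('n::finite \<Rightarrow> 'n \<Rightarrow> real) \<Rightarrow> ('n \<Rightarrow> 'n \<Rightarrow> real) \<Rightarrow> ('n \<Rightarrow> 'n \<Rightarrow> real) \<Rightarrow> real" where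
  "T4 a B M = (\<Sum>i\<in>UNIV. \<Sum>j\<in>UNIV. \<Sum>k\<in>UNIV. \<Sum>l\<in>UNIV. a i j * M k l * B i k * B j l)"

lemma T4_add: "T4 a B (\<lambda>k l. M k l + N k l) = T4 a B M + T4 a B N"
  unfolding T4_def by (simp add: algebra_simps sum.distrib)

lemma T4_zero: "T4 a B (\<lambda>k l. 0) = 0"
  unfolding T4_def by simp

lemma T4_smult: "T4 a B (\<lambda>k l. c * M k l) = c * T4 a B M"
  unfolding T4_def by (simp add: algebra_simps sum_distrib_left)

lemma T4_rank1: "T4 a B (\<lambda>k l. w k * w l) = Q a (\<lambda>i. \<Sum>k\<in>UNIV. w k * B i k)"
  unfolding T4_def Q_def
  by (simp add: algebra_simps sum_distrib_left sum_distrib_right)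

lemma T4_list: "T4 a B (\<lambda>k l. \<Sum>w\<leftarrow>ws. w k * w l) = (\<Sum>w\<leftarrow>ws. T4 a B (\<lambda>k l. w k * w l))"
proof (induction ws)
  case Nil then show ?case by (simp add: T4_zero)
next
  case (Cons w ws)
  have "T4 a B (\<lambda>k l. \<Sum>w\<leftarrow>w # ws. w k * w l) = T4 a B (\<lambda>k l. w k * w l + (\<Sum>w\<leftarrow>ws. w k * w l))"
    by (simp only: list.map sum_list.Cons)
  also have "\<dots> = T4 a B (\<lambda>k l. w k * w l) + T4 a B (\<lambda>k l. \<Sum>w\<leftarrow>ws. w k * w l)" by (rule T4_add)
  also have "\<dots> = (\<Sum>w\<leftarrow>w # ws. T4 a B (\<lambda>k l. w k * w l))"
    by (simp only: Cons.IH list.map sum_list.Cons)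
  finally show ?case .
qed

lemma alg_main:
  fixes a H :: "'n::finite \<Rightarrow> 'n \<Rightarrow> real" and f x :: "'n \<Rightarrow> real" and B :: "'n \<Rightarrow> 'n \<Rightarrow> real"
  assumes c: "c > 0" and ha: "\<forall>i j. a i j = f i * f j + c * H i j"
    and sym: "\<forall>i j. H i j = H j i" and fx: "(\<Sum>i\<in>UNIV. f i * x i) = c"
    and hx: "\<forall>i. (\<Sum>j\<in>UNIV. H i j * x j) = 0" and psd: "\<forall>v. Q a v \<ge> 0"
  shows "(\<Sum>i\<in>UNIV. \<Sum>j\<in>UNIV. \<Sum>k\<in>UNIV. \<Sum>l\<in>UNIV. a i j * a k l * B i k * B j l)
      \<ge> (\<Sum>i\<in>UNIV. \<Sum>j\<in>UNIV. \<Sum>k\<in>UNIV. \<Sum>l\<in>UNIV. a i j * f k * f l * B i k * B j l)"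
proof -
  have aeq: "a = (\<lambda>i j. f i * f j + c * H i j)" using ha by blast
  have hsym: "\<forall>j. (\<Sum>i\<in>UNIV. H i j * x i) = 0"
  proof
    fix j
    have "(\<Sum>i\<in>UNIV. H i j * x i) = (\<Sum>i\<in>UNIV. H j i * x i)"
      by (intro sum.cong refl) (metis sym)
    then show "(\<Sum>i\<in>UNIV. H i j * x i) = 0" using hx by simp
  qed
  have psdH: "Q H v \<ge> 0" for v
  proof -
    define t where "t = - (\<Sum>i\<in>UNIV. f i * v i) / c"
    have c1: "(\<Sum>i\<in>UNIV. \<Sum>j\<in>UNIV. H i j * v i * x j) = 0"
    proof -
      have "(\<Sum>i\<in>UNIV. \<Sum>j\<in>UNIV. H i j * v i * x j) = (\<Sum>i\<in>UNIV. v i * (\<Sum>j\<in>UNIV. H i j * x j))"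
        by (simp add: sum_distrib_left mult_ac)
      also have "\<dots> = 0" using hx by simp
      finally show ?thesis .
    qed
    have c2: "(\<Sum>i\<in>UNIV. \<Sum>j\<in>UNIV. H i j * x i * v j) = 0"
    proof -
      have "(\<Sum>i\<in>UNIV. \<Sum>j\<in>UNIV. H i j * x i * v j) = (\<Sum>j\<in>UNIV. \<Sum>i\<in>UNIV. H i j * x i * v j)"
        by (rule sum.swap)
      also have "\<dots> = (\<Sum>j\<in>UNIV. v j * (\<Sum>i\<in>UNIV. H i j * x i))"
        by (simp add: sum_distrib_left mult_ac)
      also have "\<dots> = 0" using hsym by simp
      finally show ?thesis .
    qed
    have c3: "Q H x = 0"
    proof -
      have "Q H x = (\<Sum>i\<in>UNIV. x i * (\<Sum>j\<in>UNIV. H i j * x j))"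
        unfolding Q_def by (simp add: sum_distrib_left mult_ac)
      also have "\<dots> = 0" using hx by simp
      finally show ?thesis .
    qed
    have fw: "(\<Sum>i\<in>UNIV. f i * (v i + t * x i)) = 0"
    proof -
      have "(\<Sum>i\<in>UNIV. f i * (v i + t * x i)) = (\<Sum>i\<in>UNIV. f i * v i) + t * (\<Sum>i\<in>UNIV. f i * x i)"
        by (simp add: distrib_left sum.distrib sum_distrib_left mult_ac)
      also have "\<dots> = 0" using fx c unfolding t_def by simp
      finally show ?thesis .
    qed
    have "0 \<le> Q a (\<lambda>i. v i + t * x i)" using psd by blast
    also have "\<dots> = c * Q H v" unfolding aeq Q_rank1_add fw Q_add_scaled c1 c2 c3 by simp
    finally show ?thesis using c by (simp add: zero_le_mult_iff)
  qed
  obtain ws where ws: "\<forall>k l. H k l = (\<Sum>w\<leftarrow>ws. w k * w l)"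
    using psd_decomp[OF sym] psdH by blast
  have "T4 a B H = (\<Sum>w\<leftarrow>ws. T4 a B (\<lambda>k l. w k * w l))"
  proof -
    have eq: "H = (\<lambda>k l. \<Sum>w\<leftarrow>ws. w k * w l)" by (intro ext) (simp add: ws)
    show ?thesis by (subst eq) (rule T4_list)
  qed
  also have "\<dots> \<ge> 0" by (rule sum_list_nonneg) (auto simp: T4_rank1 psd)
  finally have tH: "T4 a B H \<ge> 0" .
  have "T4 a B a = T4 a B (\<lambda>k l. f k * f l) + c * T4 a B H"
    by (simp only: arg_cong[OF aeq, of "T4 a B"] T4_add T4_smult)
  then have "T4 a B a \<ge> T4 a B (\<lambda>k l. f k * f l)" using tH c by simp
  then show ?thesis unfolding T4_def by (simp add: mult.assoc)
qed




lemma partial_at: "(f has_derivative D) (at x) \<Longrightarrow> partial j f x = D (axis j 1)"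
  unfolding partial_def using frechet_derivative_at by metis

lemma partial_local:
  assumes "open S" "x \<in> S" "\<forall>y\<in>S. g y = h y" "(h has_derivative D) (at x)"
  shows "partial j g x = D (axis j 1)"
proof -
  have "(g has_derivative D) (at x)"
    using has_derivative_transform_within_open[OF assms(4) assms(1) assms(2)] assms(3) by metis
  then show ?thesis by (rule partial_at)
qed

lemma dir_deriv:
  fixes h :: "real^'n::finite \<Rightarrow> real"
  assumes "h differentiable (at (p + s *\<^sub>R v))"
  shows "((\<lambda>\<sigma>. h (p + \<sigma> *\<^sub>R v)) has_real_derivative frechet_derivative h (at (p + s *\<^sub>R v)) v) (at s)"
proof -
  let ?D = "frechet_derivative h (at (p + s *\<^sub>R v))"
  have hD: "(h has_derivative ?D) (at (p + s *\<^sub>R v))" using assms frechet_derivative_works by blast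
  have lin: "linear ?D" using hD has_derivative_linear by blast
  have g: "((\<lambda>\<sigma>. p + \<sigma> *\<^sub>R v) has_derivative (\<lambda>d. d *\<^sub>R v)) (at s)"
    by (auto intro!: derivative_eq_intros)
  have "((h \<circ> (\<lambda>\<sigma>. p + \<sigma> *\<^sub>R v)) has_derivative (?D \<circ> (\<lambda>d. d *\<^sub>R v))) (at s)"
    by (rule diff_chain_at[OF g]) (use hD in simp)
  moreover have "(?D \<circ> (\<lambda>d. d *\<^sub>R v)) = (\<lambda>d. ?D v * d)"
    using lin by (auto simp: linear_scale mult.commute)
  ultimately show ?thesis unfolding has_field_derivative_def by (simp add: o_def)
qed

lemma dir_partial:
  fixes h :: "real^'n::finite \<Rightarrow> real"
  assumes "h differentiable (at (p + s *\<^sub>R axis i 1))"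
  shows "((\<lambda>\<sigma>. h (p + \<sigma> *\<^sub>R axis i 1)) has_real_derivative partial i h (p + s *\<^sub>R axis i 1)) (at s)"
  using dir_deriv[OF assms] unfolding partial_def .


lemma mixed_mvt:
  fixes h :: "real^'n::finite \<Rightarrow> real"
  assumes ball: "ball \<xi> r \<subseteq> S" and s: "0 < s" "2 * s < r"
    and dh: "\<forall>y\<in>S. h differentiable (at y)" and dP: "\<forall>y\<in>S. partial i h differentiable (at y)"
  shows "\<exists>p. dist p \<xi> \<le> 2 * s \<and>
    h (\<xi> + s *\<^sub>R axis i 1 + s *\<^sub>R axis j 1) - h (\<xi> + s *\<^sub>R axis i 1) - h (\<xi> + s *\<^sub>R axis j 1) + h \<xi>
      = s * s * partial j (partial i h) p"
proof -
  define ei :: "real^'n" where "ei = axis i 1"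
  define ej :: "real^'n" where "ej = axis j 1"
  define pt where "pt \<sigma> \<tau> = \<xi> + \<sigma> *\<^sub>R ei + \<tau> *\<^sub>R ej" for \<sigma> \<tau>
  have inS: "pt \<sigma> \<tau> \<in> S \<and> dist (pt \<sigma> \<tau>) \<xi> \<le> 2 * s"
    if "0 \<le> \<sigma>" "\<sigma> \<le> s" "0 \<le> \<tau>" "\<tau> \<le> s" for \<sigma> \<tau>
  proof -
    have "dist (pt \<sigma> \<tau>) \<xi> = norm (\<sigma> *\<^sub>R ei + \<tau> *\<^sub>R ej)"
      unfolding pt_def dist_norm by (simp add: algebra_simps)
    also have "\<dots> \<le> norm (\<sigma> *\<^sub>R ei) + norm (\<tau> *\<^sub>R ej)" by (rule norm_triangle_ineq)
    also have "\<dots> = \<sigma> + \<tau>" using that unfolding ei_def ej_def by simp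
    finally have d: "dist (pt \<sigma> \<tau>) \<xi> \<le> 2 * s" using that by simp
    then have "pt \<sigma> \<tau> \<in> ball \<xi> r" using s by (simp add: dist_commute)
    with ball d show ?thesis by blast
  qed
  define \<phi> where "\<phi> \<sigma> = h (pt \<sigma> s) - h (pt \<sigma> 0)" for \<sigma>
  have dh1: "DERIV (\<lambda>\<sigma>. h (pt \<sigma> \<tau>)) \<sigma> :> partial i h (pt \<sigma> \<tau>)"
    if "0 \<le> \<sigma>" "\<sigma> \<le> s" "0 \<le> \<tau>" "\<tau> \<le> s" for \<sigma> \<tau>
  proof -
    have e: "pt x \<tau> = (\<xi> + \<tau> *\<^sub>R ej) + x *\<^sub>R ei" for x unfolding pt_def by (simp add: algebra_simps)
    have "h differentiable (at ((\<xi> + \<tau> *\<^sub>R ej) + \<sigma> *\<^sub>R ei))" using dh inS[OF that] e by metis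
    from dir_partial[of h _ \<sigma> i, OF this[unfolded ei_def]] show ?thesis
      unfolding e ei_def .
  qed
  have dphi: "DERIV \<phi> \<sigma> :> partial i h (pt \<sigma> s) - partial i h (pt \<sigma> 0)"
    if "0 \<le> \<sigma>" "\<sigma> \<le> s" for \<sigma>
    unfolding \<phi>_def[abs_def] using that s by (intro DERIV_diff dh1) auto
  have "continuous_on {0..s} \<phi>"
    by (intro continuous_at_imp_continuous_on ballI DERIV_isCont) (use dphi in auto)
  from MVT[OF s(1) this] dphi obtain l z where z: "0 < z" "z < s" "DERIV \<phi> z :> l" "\<phi> s - \<phi> 0 = (s - 0) * l"
    by (metis differentiableI less_eq_real_def real_differentiable_def)
  have l: "l = partial i h (pt z s) - partial i h (pt z 0)"
    using DERIV_unique[OF z(3) dphi] z by auto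
  define \<psi> where "\<psi> \<tau> = partial i h (pt z \<tau>)" for \<tau>
  have dpsi: "DERIV \<psi> \<tau> :> partial j (partial i h) (pt z \<tau>)"
    if "0 \<le> \<tau>" "\<tau> \<le> s" for \<tau>
  proof -
    have e: "pt z x = (\<xi> + z *\<^sub>R ei) + x *\<^sub>R ej" for x unfolding pt_def by (simp add: algebra_simps)
    have "partial i h differentiable (at ((\<xi> + z *\<^sub>R ei) + \<tau> *\<^sub>R ej))"
      using dP inS[of z \<tau>] that z e by (metis less_eq_real_def)
    from dir_partial[of "partial i h" _ \<tau> j, OF this[unfolded ej_def]] show ?thesis
      unfolding \<psi>_def[abs_def] e ej_def .
  qed
  have "continuous_on {0..s} \<psi>"
    by (intro continuous_at_imp_continuous_on ballI DERIV_isCont) (use dpsi in auto)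
  from MVT[OF s(1) this] dpsi obtain l2 z2 where z2: "0 < z2" "z2 < s" "DERIV \<psi> z2 :> l2" "\<psi> s - \<psi> 0 = (s - 0) * l2"
    by (metis differentiableI less_eq_real_def real_differentiable_def)
  have l2: "l2 = partial j (partial i h) (pt z z2)"
    using DERIV_unique[OF z2(3) dpsi] z2 by auto
  have "h (\<xi> + s *\<^sub>R axis i 1 + s *\<^sub>R axis j 1) - h (\<xi> + s *\<^sub>R axis i 1) - h (\<xi> + s *\<^sub>R axis j 1) + h \<xi>
      = \<phi> s - \<phi> 0" unfolding \<phi>_def pt_def ei_def ej_def by simp
  also have "\<dots> = s * (\<psi> s - \<psi> 0)" using z(4) l unfolding \<psi>_def by simp
  also have "\<dots> = s * s * partial j (partial i h) (pt z z2)" using z2(4) l2 by simp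
  finally show ?thesis using inS[of z z2] z z2 by (intro exI[of _ "pt z z2"]) auto
qed


lemma clairaut:
  fixes h :: "real^'n::finite \<Rightarrow> real"
  assumes S: "open S" "\<xi> \<in> S" and dh: "\<forall>y\<in>S. h differentiable (at y)"
    and dPi: "\<forall>y\<in>S. partial i h differentiable (at y)"
    and dPj: "\<forall>y\<in>S. partial j h differentiable (at y)"
    and ci: "isCont (partial j (partial i h)) \<xi>" and cj: "isCont (partial i (partial j h)) \<xi>"
  shows "partial j (partial i h) \<xi> = partial i (partial j h) \<xi>"
proof (rule ccontr)
  let ?A = "partial j (partial i h)" and ?B = "partial i (partial j h)"
  assume ne: "?A \<xi> \<noteq> ?B \<xi>"
  define e where "e = \<bar>?A \<xi> - ?B \<xi>\<bar> / 2"
  have e: "e > 0" using ne unfolding e_def by simp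
  obtain r where r: "r > 0" "ball \<xi> r \<subseteq> S" using S open_contains_ball by blast
  obtain d1 where d1: "d1 > 0" "\<forall>y. dist y \<xi> < d1 \<longrightarrow> dist (?A y) (?A \<xi>) < e"
    using ci e unfolding continuous_at_eps_delta by blast
  obtain d2 where d2: "d2 > 0" "\<forall>y. dist y \<xi> < d2 \<longrightarrow> dist (?B y) (?B \<xi>) < e"
    using cj e unfolding continuous_at_eps_delta by blast
  define s where "s = min r (min d1 d2) / 4"
  have s: "s > 0" "2 * s < r" "2 * s < d1" "2 * s < d2" using r d1 d2 unfolding s_def by auto
  obtain p where p: "dist p \<xi> \<le> 2 * s"
    "h (\<xi> + s *\<^sub>R axis i 1 + s *\<^sub>R axis j 1) - h (\<xi> + s *\<^sub>R axis i 1) - h (\<xi> + s *\<^sub>R axis j 1) + h \<xi>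
      = s * s * ?A p"
    using mixed_mvt[OF r(2) s(1,2) dh dPi] by blast
  obtain q where q: "dist q \<xi> \<le> 2 * s"
    "h (\<xi> + s *\<^sub>R axis j 1 + s *\<^sub>R axis i 1) - h (\<xi> + s *\<^sub>R axis j 1) - h (\<xi> + s *\<^sub>R axis i 1) + h \<xi>
      = s * s * ?B q"
    using mixed_mvt[OF r(2) s(1,2) dh dPj] by blast
  have ex: "\<xi> + s *\<^sub>R axis j 1 + s *\<^sub>R axis i 1 = \<xi> + s *\<^sub>R axis i 1 + s *\<^sub>R axis j 1"
    by (simp add: algebra_simps)
  have "s * s * ?A p = s * s * ?B q" using p(2) q(2)[unfolded ex] by linarith
  then have pq: "?A p = ?B q" using s(1) by simp
  have "dist (?A p) (?A \<xi>) < e" using d1 p(1) s by auto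
  moreover have "dist (?B q) (?B \<xi>) < e" using d2 q(1) s by auto
  ultimately have "\<bar>?A \<xi> - ?B \<xi>\<bar> < 2 * e" using pq unfolding dist_real_def by linarith
  then show False unfolding e_def by simp
qed

lemma euler:
  fixes h :: "real^'n::finite \<Rightarrow> real"
  assumes dh: "h differentiable (at \<xi>)" and hom: "\<forall>t>0. h (t *\<^sub>R \<xi>) = g t"
    and dg: "(g has_real_derivative g') (at 1)"
  shows "(\<Sum>i\<in>UNIV. partial i h \<xi> * \<xi>$i) = g'"
proof -
  let ?D = "frechet_derivative h (at \<xi>)"
  have hD: "(h has_derivative ?D) (at \<xi>)" using dh frechet_derivative_works by blast
  have lin: "linear ?D" using hD has_derivative_linear by blast
  have g: "((\<lambda>t. t *\<^sub>R \<xi>) has_derivative (\<lambda>d. d *\<^sub>R \<xi>)) (at 1)"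
    by (auto intro!: derivative_eq_intros)
  have "((h \<circ> (\<lambda>t. t *\<^sub>R \<xi>)) has_derivative (?D \<circ> (\<lambda>d. d *\<^sub>R \<xi>))) (at 1)"
    by (rule diff_chain_at[OF g]) (use hD in simp)
  moreover have "(?D \<circ> (\<lambda>d. d *\<^sub>R \<xi>)) = (\<lambda>d. ?D \<xi> * d)"
    using lin by (auto simp: linear_scale mult.commute)
  ultimately have d1: "((\<lambda>t. h (t *\<^sub>R \<xi>)) has_real_derivative ?D \<xi>) (at 1)"
    unfolding has_field_derivative_def by (simp add: o_def)
  have "((\<lambda>t. h (t *\<^sub>R \<xi>)) has_real_derivative g') (at 1)"
    by (rule has_field_derivative_transform_within_open[OF dg, of "{0<..}"]) (use hom in auto)
  then have Dx: "?D \<xi> = g'" using DERIV_unique d1 by blast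
  have "?D \<xi> = ?D (\<Sum>i\<in>UNIV. \<xi>$i *\<^sub>R axis i 1)"
    using basis_expansion[of \<xi>] by (simp add: scalar_mult_eq_scaleR)
  also have "\<dots> = (\<Sum>i\<in>UNIV. \<xi>$i * ?D (axis i 1))"
    using lin by (simp add: linear_sum linear_scale)
  finally show ?thesis using Dx unfolding partial_def by (simp add: mult.commute)
qed

lemma hom_partial:
  fixes F :: "real^'n::finite \<Rightarrow> real"
  assumes t: "t > 0" and hom: "\<forall>z. F (t *\<^sub>R z) = t * F z"
    and d0: "F differentiable (at \<xi>)" and d1: "F differentiable (at (t *\<^sub>R \<xi>))"
  shows "partial i F (t *\<^sub>R \<xi>) = partial i F \<xi>"
proof -
  let ?D0 = "frechet_derivative F (at \<xi>)" and ?D1 = "frechet_derivative F (at (t *\<^sub>R \<xi>))"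
  have h0: "(F has_derivative ?D0) (at \<xi>)" using d0 frechet_derivative_works by blast
  have h1: "(F has_derivative ?D1) (at (t *\<^sub>R \<xi>))" using d1 frechet_derivative_works by blast
  have lin1: "linear ?D1" using h1 has_derivative_linear by blast
  have g: "((\<lambda>z. t *\<^sub>R z) has_derivative (\<lambda>d. t *\<^sub>R d)) (at \<xi>)"
    by (auto intro!: derivative_eq_intros)
  have A: "((F \<circ> (\<lambda>z. t *\<^sub>R z)) has_derivative (?D1 \<circ> (\<lambda>d. t *\<^sub>R d))) (at \<xi>)"
    by (rule diff_chain_at[OF g]) (use h1 in simp)
  have "(F \<circ> (\<lambda>z. t *\<^sub>R z)) = (\<lambda>z. t * F z)" using hom by (auto simp: o_def)
  moreover have "((\<lambda>z. t * F z) has_derivative (\<lambda>d. t * ?D0 d)) (at \<xi>)"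
    using h0 by (auto intro!: derivative_eq_intros)
  ultimately have "(?D1 \<circ> (\<lambda>d. t *\<^sub>R d)) = (\<lambda>d. t * ?D0 d)"
    using A has_derivative_unique by metis
  then have "?D1 (t *\<^sub>R axis i 1) = t * ?D0 (axis i 1)" by (metis comp_apply)
  then have "t * ?D1 (axis i 1) = t * ?D0 (axis i 1)" using lin1 by (simp add: linear_scale)
  then show ?thesis using t unfolding partial_def by simp
qed


lemma hess_sq:
  fixes F G :: "real^'n::finite \<Rightarrow> real"
  assumes S: "open S" "\<xi> \<in> S" and dF: "\<forall>y\<in>S. F differentiable (at y)"
    and dP: "\<forall>y\<in>S. partial i F differentiable (at y)" and G: "\<forall>y. G y = c * (F y * F y)"
  shows "hess G \<xi> i j = c * 2 * (partial i F \<xi> * partial j F \<xi> + F \<xi> * partial j (partial i F) \<xi>)"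
proof -
  have pG: "\<forall>y\<in>S. partial i G y = c * (partial i F y * F y + F y * partial i F y)"
  proof
    fix y assume y: "y \<in> S"
    let ?DF = "frechet_derivative F (at y)"
    have hF: "(F has_derivative ?DF) (at y)" using dF y frechet_derivative_works by blast
    have "((\<lambda>y. c * (F y * F y)) has_derivative (\<lambda>d. c * (F y * ?DF d + ?DF d * F y))) (at y)"
      by (intro has_derivative_mult_right has_derivative_mult hF)
    moreover have "G = (\<lambda>y. c * (F y * F y))" using G by auto
    ultimately have "partial i G y = c * (F y * ?DF (axis i 1) + ?DF (axis i 1) * F y)"
      by (simp only: partial_at)
    then show "partial i G y = c * (partial i F y * F y + F y * partial i F y)"
      unfolding partial_def by (simp add: algebra_simps)
  qed
  let ?DF = "frechet_derivative F (at \<xi>)" and ?P = "partial i F"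
  let ?DP = "frechet_derivative ?P (at \<xi>)"
  have hF: "(F has_derivative ?DF) (at \<xi>)" using dF S frechet_derivative_works by blast
  have hP: "(?P has_derivative ?DP) (at \<xi>)" using dP S frechet_derivative_works by blast
  have "((\<lambda>y. c * (?P y * F y + F y * ?P y)) has_derivative
     (\<lambda>d. c * ((?P \<xi> * ?DF d + ?DP d * F \<xi>) + (F \<xi> * ?DP d + ?DF d * ?P \<xi>)))) (at \<xi>)"
    by (intro has_derivative_mult_right has_derivative_add has_derivative_mult hF hP)
  from partial_local[OF S pG this, of j]
  have "partial j (partial i G) \<xi> = c * ((?P \<xi> * ?DF (axis j 1) + ?DP (axis j 1) * F \<xi>) + (F \<xi> * ?DP (axis j 1) + ?DF (axis j 1) * ?P \<xi>))" .
  moreover have "?DF (axis j 1) = partial j F \<xi>" "?DP (axis j 1) = partial j ?P \<xi>" unfolding partial_def by simp_all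
  ultimately show ?thesis unfolding hess_def by (simp add: algebra_simps)
qed



theorem lemma2p3:
  fixes F :: "real^'n::finite \<Rightarrow> real" and u :: "real^'n \<Rightarrow> real"
    and U :: "(real^'n) set" and x :: "real^'n"
  assumes "strongly_convex_norm F"
    and "Ck_on 3 (UNIV - {0}) F"
    and "open U"
    and "Ck_on 2 U u"
    and "x \<in> U"
    and "grad u x \<noteq> 0"
  shows "(let \<xi> = grad u x;
              a = hess (\<lambda>y. (F y)^2 / 2) \<xi>;
              Fd = (\<lambda>i. partial i F \<xi>);
              D2u = hess u x
          in (\<Sum>i\<in>UNIV. \<Sum>j\<in>UNIV. \<Sum>k\<in>UNIV. \<Sum>l\<in>UNIV.
                a i j * a k l * D2u i k * D2u j l)
           \<ge> (\<Sum>i\<in>UNIV. \<Sum>j\<in>UNIV. \<Sum>k\<in>UNIV. \<Sum>l\<in>UNIV.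
                a i j * Fd k * Fd l * D2u i k * D2u j l))"
proof -
  define S :: "(real^'n) set" where "S = UNIV - {0}"
  have So: "open S" unfolding S_def by (intro open_Diff open_UNIV closed_singleton)
  define \<xi> where "\<xi> = grad u x"
  have \<xi>S: "\<xi> \<in> S" using assms(6) unfolding S_def \<xi>_def by simp
  have C3: "(\<forall>y\<in>S. F differentiable (at y)) \<and> (\<forall>i. (\<forall>y\<in>S. partial i F differentiable (at y)) \<and>
      (\<forall>j. (\<forall>y\<in>S. partial j (partial i F) differentiable (at y)) \<and>
        (\<forall>k. continuous_on S (partial k (partial j (partial i F))))))"
    using assms(2) unfolding S_def by (simp add: numeral_3_eq_3)
  have dF: "\<forall>y\<in>S. F differentiable (at y)" using C3 by blast
  have dP: "\<forall>y\<in>S. partial i F differentiable (at y)" for i using C3 by blast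
  have cPP: "isCont (partial j (partial i F)) \<xi>" for i j
  proof -
    have "partial j (partial i F) differentiable (at \<xi>)" using C3 \<xi>S by blast
    then show ?thesis using differentiable_imp_continuous_within by blast
  qed
  define H where "H i j = hess F \<xi> i j" for i j
  define f where "f i = partial i F \<xi>" for i
  define a where "a = hess (\<lambda>y. (F y)^2 / 2) \<xi>"
  have symH: "\<forall>i j. H i j = H j i"
    unfolding H_def hess_def using clairaut[OF So \<xi>S dF dP dP cPP cPP] by blast
  have nf: "is_norm_fn F" using assms(1) unfolding strongly_convex_norm_def by blast
  have hom: "\<forall>t z. t > 0 \<longrightarrow> F (t *\<^sub>R z) = t * F z" using nf unfolding is_norm_fn_def by blast
  have Fpos: "F \<xi> > 0" using nf \<xi>S unfolding is_norm_fn_def S_def by blast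
  have ha: "\<forall>i j. a i j = f i * f j + F \<xi> * H i j"
  proof (intro allI)
    fix i j
    have "hess (\<lambda>y. (F y)^2 / 2) \<xi> i j = 1/2 * 2 * (partial i F \<xi> * partial j F \<xi> + F \<xi> * partial j (partial i F) \<xi>)"
      by (rule hess_sq[OF So \<xi>S dF dP]) (simp add: power2_eq_square)
    then show "a i j = f i * f j + F \<xi> * H i j" unfolding a_def f_def H_def hess_def by simp
  qed
  have h2: "hess (\<lambda>y. (F y)^2) \<xi> i j = 2 * a i j" for i j
  proof -
    have "hess (\<lambda>y. (F y)^2) \<xi> i j = 1 * 2 * (partial i F \<xi> * partial j F \<xi> + F \<xi> * partial j (partial i F) \<xi>)"
      by (rule hess_sq[OF So \<xi>S dF dP]) (simp add: power2_eq_square)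
    then show ?thesis using ha unfolding f_def H_def hess_def by simp
  qed
  have psd: "\<forall>w. Q a w \<ge> 0"
  proof
    fix w :: "'n \<Rightarrow> real"
    define v :: "real^'n" where "v = (\<chi> k. w k)"
    have eqQ: "(\<Sum>i\<in>UNIV. \<Sum>j\<in>UNIV. hess (\<lambda>y. (F y)^2) \<xi> i j * v$i * v$j) = 2 * Q a w"
      unfolding h2 Q_def v_def by (simp add: sum_distrib_left mult_ac)
    show "Q a w \<ge> 0"
    proof (cases "v = 0")
      case True
      then have "w = (\<lambda>k. 0)" unfolding v_def by (auto simp: vec_eq_iff)
      then show ?thesis unfolding Q_def by simp
    next
      case False
      then have "(\<Sum>i\<in>UNIV. \<Sum>j\<in>UNIV. hess (\<lambda>y. (F y)^2) \<xi> i j * v$i * v$j) > 0"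
        using assms(1) \<xi>S unfolding strongly_convex_norm_def S_def by blast
      then show ?thesis using eqQ by simp
    qed
  qed
  have fx: "(\<Sum>i\<in>UNIV. f i * \<xi>$i) = F \<xi>"
    unfolding f_def
  proof (rule euler)
    show "F differentiable (at \<xi>)" using dF \<xi>S by blast
    show "\<forall>t>0. F (t *\<^sub>R \<xi>) = t * F \<xi>" using hom by blast
    show "((\<lambda>t. t * F \<xi>) has_real_derivative F \<xi>) (at 1)"
      by (auto intro!: derivative_eq_intros)
  qed
  have hx: "\<forall>i. (\<Sum>j\<in>UNIV. H i j * \<xi>$j) = 0"
  proof
    fix i
    show "(\<Sum>j\<in>UNIV. H i j * \<xi>$j) = 0"
      unfolding H_def hess_def
    proof (rule euler)
      show "partial i F differentiable (at \<xi>)" using dP \<xi>S by blast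
      show "\<forall>t>0. partial i F (t *\<^sub>R \<xi>) = partial i F \<xi>"
      proof (intro allI impI)
        fix t :: real assume t: "t > 0"
        have "t *\<^sub>R \<xi> \<in> S" using t \<xi>S unfolding S_def by simp
        then show "partial i F (t *\<^sub>R \<xi>) = partial i F \<xi>"
          using hom_partial[OF t _ _ _] hom t dF \<xi>S by blast
      qed
      show "((\<lambda>t. partial i F \<xi>) has_real_derivative 0) (at 1)" by simp
    qed
  qed
  have main: "(\<Sum>i\<in>UNIV. \<Sum>j\<in>UNIV. \<Sum>k\<in>UNIV. \<Sum>l\<in>UNIV. a i j * a k l * hess u x i k * hess u x j l)
      \<ge> (\<Sum>i\<in>UNIV. \<Sum>j\<in>UNIV. \<Sum>k\<in>UNIV. \<Sum>l\<in>UNIV. a i j * f k * f l * hess u x i k * hess u x j l)"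
    by (rule alg_main[OF Fpos ha symH fx hx psd])
  then show ?thesis unfolding Let_def a_def f_def \<xi>_def .
qed

end
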